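(* Let $\mathbf{k}$ be a perfect field and $L/\mathbf{k}$ a quadratic extension. Let $p=\{p_1,p_2,p_3\}$ and $q=\{q_1,q_2,q_3\}$ be points of degree $3$ in $\mathcal{Q}^L$ such that for any $h\in\operatorname{Gal}(\overline{\mathbf{k}}/\mathbf{k})$ there exists $\sigma\in\mathrm{Sym}_3$ with $p_i^h=p_{\sigma(i)}$ and $q_i^h=q_{\sigma(i)}$ for $i=1,2,3$. Suppose that the geometric components of $p$ (resp. of $q$) lie on pairwise distinct rulings of $\mathcal{Q}^L_L\simeq\mathbb{P}^1_L\times\mathbb{P}^1_L$. Then there exists $\alpha\in\operatorname{Aut}_{\mathbf{k}}(\mathcal{Q}^L)$ such that $\alpha(p_i)=q_i$ for $i=1,2,3$.
   Context: With $g$ the generator of $\operatorname{Gal}(L/\mathbf{k})$, $\mathcal{Q}^L$ is the $\mathbf{k}$-structure on $\mathbb{P}^1_L\times\mathbb{P}^1_L$ given by the Galois action $([u_0:u_1],[v_0:v_1])\mapsto([v_0^g:v_1^g],[u_0^g:u_1^g])$. A point of degree $3$ is a $\operatorname{Gal}(\overline{\mathbf{k}}/\mathbf{k})$-orbit $\{p_1,p_2,p_3\}$ of cardinality $3$ in $\mathcal{Q}^L(\overline{\mathbf{k}})$; "pairwise distinct rulings" means no two of the $p_i$ lie on a common fibre of either projection. *)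

theory Defs
  imports "HOL-Computational_Algebra.Polynomial"
begin

text \<open>The ambient type 'a plays the role of an algebraic closure of the base field k,
  which is modelled as a subfield (a subset of the carrier of 'a).\<close>

definition alg_closed_type :: "'a::field itself \<Rightarrow> bool" where
  "alg_closed_type _ \<longleftrightarrow> (\<forall>f::'a poly. degree f > 0 \<longrightarrow> (\<exists>x. poly f x = 0))"

definition is_subfield :: "'a::field set \<Rightarrow> bool" where
  "is_subfield k \<longleftrightarrow> 0 \<in> k \<and> 1 \<in> k \<and> (\<forall>x\<in>k. \<forall>y\<in>k. x + y \<in> k \<and> x - y \<in> k \<and> x * y \<in> k)
     \<and> (\<forall>x\<in>k. x \<noteq> 0 \<longrightarrow> inverse x \<in> k)"

definition algebraic_over :: "'a::field set \<Rightarrow> 'a \<Rightarrow> bool" where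
  "algebraic_over k x \<longleftrightarrow> (\<exists>f. f \<noteq> 0 \<and> (\<forall>i. coeff f i \<in> k) \<and> poly f x = 0)"

definition perfect_subfield :: "'a::field set \<Rightarrow> bool" where
  "perfect_subfield k \<longleftrightarrow> is_subfield k \<and>
     (CHAR('a) = 0 \<or> (\<forall>x\<in>k. \<exists>y\<in>k. y ^ CHAR('a) = x))"

definition quadratic_ext :: "'a::field set \<Rightarrow> 'a set \<Rightarrow> bool" where
  "quadratic_ext k L \<longleftrightarrow> is_subfield L \<and> k \<subseteq> L \<and>
     (\<exists>b1\<in>L. \<exists>b2\<in>L.
        (\<forall>x\<in>k. \<forall>y\<in>k. x * b1 + y * b2 = 0 \<longrightarrow> x = 0 \<and> y = 0) \<and>
        (\<forall>z\<in>L. \<exists>x\<in>k. \<exists>y\<in>k. z = x * b1 + y * b2))"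

definition Gal :: "'a::field set \<Rightarrow> ('a \<Rightarrow> 'a) set" where
  "Gal k = {h. bij h \<and> h 0 = 0 \<and> h 1 = 1 \<and> (\<forall>x y. h (x + y) = h x + h y) \<and>
               (\<forall>x y. h (x * y) = h x * h y) \<and> (\<forall>x\<in>k. h x = x)}"

definition proj_pt :: "'a::field \<times> 'a \<Rightarrow> ('a \<times> 'a) set" where
  "proj_pt u = {(c * fst u, c * snd u) | c. c \<noteq> 0}"

definition P1 :: "('a::field \<times> 'a) set set" where
  "P1 = {proj_pt u | u. u \<noteq> (0, 0)}"

type_synonym 'a qpt = "('a \<times> 'a) set \<times> ('a \<times> 'a) set"

definition QL_points :: "'a::field qpt set" where
  "QL_points = P1 \<times> P1"

definition conj_P1 :: "('a::field \<Rightarrow> 'a) \<Rightarrow> ('a \<times> 'a) set \<Rightarrow> ('a \<times> 'a) set" where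
  "conj_P1 h P = (\<lambda>(x, y). (h x, h y)) ` P"

text \<open>Galois action defining the k-structure Q^L: elements of Gal(kbar/k) restricting
  to the identity of L act coordinatewise; those restricting to the generator g of
  Gal(L/k) act by ([u],[v]) maps to ([v^h],[u^h]).\<close>
definition gal_act :: "'a::field set \<Rightarrow> ('a \<Rightarrow> 'a) \<Rightarrow> 'a qpt \<Rightarrow> 'a qpt" where
  "gal_act L h pt = (if (\<forall>x\<in>L. h x = x)
       then (conj_P1 h (fst pt), conj_P1 h (snd pt))
       else (conj_P1 h (snd pt), conj_P1 h (fst pt)))"

text \<open>A point of degree 3 of Q^L, given by an enumeration p 1, p 2, p 3 of its geometric
  components: three distinct kbar-points forming one Galois orbit.\<close>
definition deg3_point :: "'a::field set \<Rightarrow> 'a set \<Rightarrow> (nat \<Rightarrow> 'a qpt) \<Rightarrow> bool" where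
  "deg3_point k L p \<longleftrightarrow> p ` {1,2,3} \<subseteq> QL_points \<and> inj_on p {1,2,3} \<and>
     (\<lambda>h. gal_act L h (p 1)) ` Gal k = p ` {1,2,3}"

definition distinct_rulings :: "(nat \<Rightarrow> 'a qpt) \<Rightarrow> bool" where
  "distinct_rulings p \<longleftrightarrow> (\<forall>i\<in>{1,2,3}. \<forall>j\<in>{1,2,3}. i \<noteq> j \<longrightarrow>
      fst (p i) \<noteq> fst (p j) \<and> snd (p i) \<noteq> snd (p j))"

definition mat_P1 :: "'a::field \<times> 'a \<times> 'a \<times> 'a \<Rightarrow> ('a \<times> 'a) set \<Rightarrow> ('a \<times> 'a) set" where
  "mat_P1 M P = (case M of (a, b, c, d) \<Rightarrow> (\<lambda>(x, y). (a * x + b * y, c * x + d * y)) ` P)"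

definition invertible2 :: "'a::field \<times> 'a \<times> 'a \<times> 'a \<Rightarrow> bool" where
  "invertible2 M = (case M of (a, b, c, d) \<Rightarrow> a * d - b * c \<noteq> 0)"

text \<open>Aut_kbar(P1 x P1) = (PGL2 x PGL2) semidirect Z/2: maps
  ([u],[v]) to ([A u],[B v]) or to ([A v],[B u]).\<close>
definition Aut_kbar :: "('a::field qpt \<Rightarrow> 'a qpt) set" where
  "Aut_kbar = {\<alpha>. \<exists>A B s. invertible2 A \<and> invertible2 B \<and>
      (\<forall>pt\<in>QL_points. \<alpha> pt = (if s then (mat_P1 A (snd pt), mat_P1 B (fst pt))
                                    else (mat_P1 A (fst pt), mat_P1 B (snd pt))))}"

text \<open>Aut_k(Q^L): kbar-automorphisms that are defined over k, i.e. commute with the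
  Galois action defining the k-structure (Galois descent, k perfect).\<close>
definition Aut_QL :: "'a::field set \<Rightarrow> 'a set \<Rightarrow> ('a qpt \<Rightarrow> 'a qpt) set" where
  "Aut_QL k L = {\<alpha> \<in> Aut_kbar. \<forall>h\<in>Gal k. \<forall>pt\<in>QL_points.
       \<alpha> (gal_act L h pt) = gal_act L h (\<alpha> pt)}"

end

theory Submission
  imports Defs
begin

definition mmul :: "'a::field \<times> 'a \<times> 'a \<times> 'a \<Rightarrow> 'a \<times> 'a \<times> 'a \<times> 'a \<Rightarrow> 'a \<times> 'a \<times> 'a \<times> 'a" where
  "mmul M N = (case M of (a,b,c,d) \<Rightarrow> case N of (a',b',c',d') \<Rightarrow>
     (a*a' + b*c', a*b' + b*d', c*a' + d*c', c*b' + d*d'))"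

definition minv :: "'a::field \<times> 'a \<times> 'a \<times> 'a \<Rightarrow> 'a \<times> 'a \<times> 'a \<times> 'a" where
  "minv M = (case M of (a,b,c,d) \<Rightarrow> (d/(a*d-b*c), -b/(a*d-b*c), -c/(a*d-b*c), a/(a*d-b*c)))"

definition conjM :: "('a \<Rightarrow> 'a) \<Rightarrow> 'a \<times> 'a \<times> 'a \<times> 'a \<Rightarrow> 'a \<times> 'a \<times> 'a \<times> 'a" where
  "conjM h M = (case M of (a,b,c,d) \<Rightarrow> (h a, h b, h c, h d))"

lemma mat_P1_mult: "mat_P1 M (mat_P1 N X) = mat_P1 (mmul M N) X"
  by (cases M; cases N) (auto simp: mat_P1_def mmul_def image_image algebra_simps case_prod_beta)

lemma mat_P1_id: "mat_P1 (1,0,0,1) X = X"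
  by (auto simp: mat_P1_def case_prod_beta)

lemma mmul_minv: "invertible2 N \<Longrightarrow> mmul (minv N) N = (1,0,0,1)"
proof (cases N)
  fix a b c d :: 'a
  assume *: "invertible2 N" "N = (a,b,c,d)"
  obtain D where hD: "a*d-b*c = D" by blast
  have D: "D \<noteq> 0" using * hD by (auto simp: invertible2_def)
  have "minv N = (d/D, -b/D, -c/D, a/D)" using * hD by (simp add: minv_def)
  moreover have "d/D*a + (-b/D)*c = 1" using D hD by (simp add: field_simps)
  moreover have "d/D*b + (-b/D)*d = 0" using D hD by (simp add: field_simps)
  moreover have "(-c/D)*a + a/D*c = 0" using D hD by (simp add: field_simps)
  moreover have "(-c/D)*b + a/D*d = 1" using D hD by (simp add: field_simps)
  ultimately show ?thesis using * by (simp add: mmul_def)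
qed

lemma minv_inv: "invertible2 N \<Longrightarrow> invertible2 (minv N)"
proof (cases N)
  fix a b c d :: 'a
  assume *: "invertible2 N" "N = (a,b,c,d)"
  obtain D where hD: "a*d-b*c = D" by blast
  have D: "D \<noteq> 0" using * hD by (auto simp: invertible2_def)
  have m: "minv N = (d/D, -b/D, -c/D, a/D)" using * hD by (simp add: minv_def)
  have "d/D * (a/D) - (-b/D)*(-c/D) = (a*d-b*c)/(D*D)"
    by (simp add: diff_divide_distrib mult.commute)
  also have "(a*d-b*c)/(D*D) = 1/D" using D hD by simp
  finally have v: "d/D * (a/D) - (-b/D)*(-c/D) = 1/D" .
  show ?thesis unfolding m invertible2_def prod.case v using D by simp
qed

lemma mmul_inv: "invertible2 M \<Longrightarrow> invertible2 N \<Longrightarrow> invertible2 (mmul M N)"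
proof (cases M; cases N)
  fix a b c d a' b' c' d' :: 'a
  assume *: "invertible2 M" "invertible2 N" "M = (a,b,c,d)" "N = (a',b',c',d')"
  have "(a*a' + b*c')*(c*b' + d*d') - (a*b' + b*d')*(c*a' + d*c') = (a*d-b*c)*(a'*d'-b'*c')"
    by (simp add: algebra_simps)
  moreover have "(a*d-b*c)*(a'*d'-b'*c') \<noteq> 0" using * by (simp add: invertible2_def)
  ultimately show ?thesis using * unfolding mmul_def invertible2_def by (simp only: prod.case) (metis eq_iff_diff_eq_0)
qed

lemma mat_P1_proj: "mat_P1 (a,b,c,d) (proj_pt (x,y)) = proj_pt (a*x + b*y, c*x + d*y)"
proof -
  have "mat_P1 (a,b,c,d) (proj_pt (x,y)) = (\<lambda>e. (a*(e*x) + b*(e*y), c*(e*x) + d*(e*y))) ` {e. e \<noteq> 0}"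
    by (auto simp: mat_P1_def proj_pt_def image_def)
  also have "\<dots> = (\<lambda>e. (e*(a*x + b*y), e*(c*x + d*y))) ` {e. e \<noteq> 0}"
    by (simp add: algebra_simps)
  also have "\<dots> = proj_pt (a*x + b*y, c*x + d*y)"
    by (auto simp: proj_pt_def image_def)
  finally show ?thesis .
qed

lemma proj_pt_scale: "(e::'a::field) \<noteq> 0 \<Longrightarrow> proj_pt (e*x, e*y) = proj_pt (x,y)"
proof -
  assume e: "e \<noteq> 0"
  show ?thesis
  proof (rule set_eqI)
    fix z
    show "z \<in> proj_pt (e*x, e*y) \<longleftrightarrow> z \<in> proj_pt (x,y)"
    proof
      assume "z \<in> proj_pt (e*x, e*y)"
      then obtain c where c: "c \<noteq> 0" "z = (c*(e*x), c*(e*y))" by (auto simp: proj_pt_def)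
      then have "z = ((c*e)*x, (c*e)*y)" "c*e \<noteq> 0" using e by (auto simp: mult.assoc)
      then show "z \<in> proj_pt (x,y)" unfolding proj_pt_def by auto
    next
      assume "z \<in> proj_pt (x,y)"
      then obtain c where c: "c \<noteq> 0" "z = (c*x, c*y)" by (auto simp: proj_pt_def)
      then have "z = ((c/e)*(e*x), (c/e)*(e*y))" "c/e \<noteq> 0" using e by auto
      then show "z \<in> proj_pt (e*x, e*y)" unfolding proj_pt_def by (auto simp del: times_divide_eq_left)
    qed
  qed
qed

lemma proj_pt_eqD: "proj_pt (x,y) = proj_pt (x',y') \<Longrightarrow> \<exists>c. c \<noteq> 0 \<and> x' = c*x \<and> y' = c*y"
proof -
  assume "proj_pt (x,y) = proj_pt (x',y')"
  moreover have "(x',y') \<in> proj_pt (x',y')" unfolding proj_pt_def by (metis (mono_tags, lifting) CollectI fst_conv snd_conv mult_1 one_neq_zero)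
  ultimately have "(x',y') \<in> proj_pt (x,y)" by simp
  then show ?thesis by (auto simp: proj_pt_def)
qed

lemma proj_pt_det:
  assumes ne: "proj_pt (x,y) \<noteq> proj_pt (x',y')" and nz: "(x,y) \<noteq> (0,0)" "(x',y') \<noteq> (0,0)"
  shows "x*y' - y*x' \<noteq> (0::'a::field)"
proof
  assume d: "x*y' - y*x' = 0"
  obtain c where c: "x' = c*x" "y' = c*y"
  proof (cases "x = 0")
    case True
    then have "y \<noteq> 0" using nz by auto
    moreover have "x' = 0" using d True \<open>y \<noteq> 0\<close> by simp
    ultimately show ?thesis using that[of "y'/y"] True by auto
  next
    case False
    have "y' = x'/x * y" using d False by (simp add: field_simps)
    then show ?thesis using that[of "x'/x"] False by auto
  qed
  have "c \<noteq> 0" using c nz by auto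
  then have "proj_pt (x',y') = proj_pt (x,y)" using c proj_pt_scale by metis
  then show False using ne by simp
qed

lemma P1_E: "X \<in> P1 \<Longrightarrow> (\<And>x y. X = proj_pt (x,y) \<Longrightarrow> (x,y) \<noteq> (0,0) \<Longrightarrow> thesis) \<Longrightarrow> thesis"
  by (auto simp: P1_def)


lemma mmul_minv2: "invertible2 N \<Longrightarrow> mmul N (minv N) = (1,0,0,1)"
proof (cases N)
  fix a b c d :: 'a
  assume *: "invertible2 N" "N = (a,b,c,d)"
  obtain D where hD: "a*d-b*c = D" by blast
  have D: "D \<noteq> 0" using * hD by (auto simp: invertible2_def)
  have "minv N = (d/D, -b/D, -c/D, a/D)" using * hD by (simp add: minv_def)
  moreover have "a*(d/D) + b*(-c/D) = 1" using D hD by (simp add: field_simps)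
  moreover have "a*(-b/D) + b*(a/D) = 0" using D hD by (simp add: field_simps)
  moreover have "c*(d/D) + d*(-c/D) = 0" using D hD by (simp add: field_simps)
  moreover have "c*(-b/D) + d*(a/D) = 1" using D hD by (simp add: field_simps)
  ultimately show ?thesis using * by (simp add: mmul_def)
qed

lemma indep:
  fixes x y a0 a1 b0 b1 :: "'a::field"
  assumes "x*a0 + y*b0 = 0" "x*a1 + y*b1 = 0" "a0*b1 - a1*b0 \<noteq> 0"
  shows "x = 0 \<and> y = 0"
proof -
  have "x*(a0*b1 - a1*b0) = b1*(x*a0 + y*b0) - b0*(x*a1 + y*b1)" by (simp add: algebra_simps)
  also have "\<dots> = 0" using assms by simp
  finally have x: "x = 0" using assms(3) by simp
  have "y*(a0*b1 - a1*b0) = a0*(x*a1 + y*b1) - a1*(x*a0 + y*b0)" by (simp add: algebra_simps)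
  also have "\<dots> = 0" using assms by simp
  finally have "y = 0" using assms(3) by simp
  with x show ?thesis by simp
qed

lemma frame:
  fixes a0 a1 b0 b1 c0 c1 :: "'a::field"
  assumes dab: "a0*b1 - a1*b0 \<noteq> 0" and dac: "a0*c1 - a1*c0 \<noteq> 0" and dbc: "b0*c1 - b1*c0 \<noteq> 0"
  shows "\<exists>F. invertible2 F \<and> mat_P1 F (proj_pt (1,0)) = proj_pt (a0,a1) \<and>
     mat_P1 F (proj_pt (0,1)) = proj_pt (b0,b1) \<and> mat_P1 F (proj_pt (1,1)) = proj_pt (c0,c1)"
proof -
  obtain D where hD: "a0*b1 - a1*b0 = D" by blast
  have D: "D \<noteq> 0" using dab hD by simp
  define l where "l = (c0*b1 - c1*b0)/D"
  define m where "m = (a0*c1 - a1*c0)/D"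
  have l: "l \<noteq> 0" unfolding l_def using D dbc by (auto simp: algebra_simps)
  have m: "m \<noteq> 0" unfolding m_def using D dac by auto
  have "l*a0 + m*b0 = ((c0*b1 - c1*b0)*a0 + (a0*c1 - a1*c0)*b0)/D"
    by (simp add: l_def m_def add_divide_distrib)
  also have "\<dots> = c0*D/D" by (simp add: hD[symmetric] algebra_simps)
  finally have e0: "l*a0 + m*b0 = c0" using D by simp
  have "l*a1 + m*b1 = ((c0*b1 - c1*b0)*a1 + (a0*c1 - a1*c0)*b1)/D"
    by (simp add: l_def m_def add_divide_distrib)
  also have "\<dots> = c1*D/D" by (simp add: hD[symmetric] algebra_simps)
  finally have e1: "l*a1 + m*b1 = c1" using D by simp
  let ?F = "(l*a0, m*b0, l*a1, m*b1)"
  have "(l*a0)*(m*b1) - (m*b0)*(l*a1) = l*m*(a0*b1 - a1*b0)" by (simp add: algebra_simps)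
  then have inv: "invertible2 ?F" using l m dab by (simp add: invertible2_def mult.commute)
  have "mat_P1 ?F (proj_pt (1,0)) = proj_pt (l*a0, l*a1)" by (simp add: mat_P1_proj)
  also have "\<dots> = proj_pt (a0,a1)" using l by (rule proj_pt_scale)
  finally have 1: "mat_P1 ?F (proj_pt (1,0)) = proj_pt (a0,a1)" .
  have "mat_P1 ?F (proj_pt (0,1)) = proj_pt (m*b0, m*b1)" by (simp add: mat_P1_proj)
  also have "\<dots> = proj_pt (b0,b1)" using m by (rule proj_pt_scale)
  finally have 2: "mat_P1 ?F (proj_pt (0,1)) = proj_pt (b0,b1)" .
  have 3: "mat_P1 ?F (proj_pt (1,1)) = proj_pt (c0,c1)" by (simp add: mat_P1_proj e0 e1)
  show ?thesis using inv 1 2 3 by blast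
qed

lemma frame_P1:
  assumes "X1 \<in> P1" "X2 \<in> P1" "X3 \<in> P1" "X1 \<noteq> X2" "X1 \<noteq> X3" "X2 \<noteq> X3"
  shows "\<exists>F. invertible2 F \<and> mat_P1 F (proj_pt (1,0)) = X1 \<and>
     mat_P1 F (proj_pt (0,1)) = X2 \<and> mat_P1 F (proj_pt (1,1)) = (X3::('a::field \<times> 'a) set)"
proof -
  obtain a0 a1 where a: "X1 = proj_pt (a0,a1)" "(a0,a1) \<noteq> (0,0)" using assms(1) by (rule P1_E)
  obtain b0 b1 where b: "X2 = proj_pt (b0,b1)" "(b0,b1) \<noteq> (0,0)" using assms(2) by (rule P1_E)
  obtain c0 c1 where c: "X3 = proj_pt (c0,c1)" "(c0,c1) \<noteq> (0,0)" using assms(3) by (rule P1_E)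
  have "a0*b1 - a1*b0 \<noteq> 0" using proj_pt_det[of a0 a1 b0 b1] a b assms by simp
  moreover have "a0*c1 - a1*c0 \<noteq> 0" using proj_pt_det[of a0 a1 c0 c1] a c assms by simp
  moreover have "b0*c1 - b1*c0 \<noteq> 0" using proj_pt_det[of b0 b1 c0 c1] b c assms by simp
  ultimately show ?thesis using frame[of a0 b1 a1 b0 c1 c0] a b c by simp
qed

lemma exists_mat:
  assumes "\<forall>j\<in>{1,2,3::nat}. P j \<in> P1 \<and> Q j \<in> P1"
    and "P 1 \<noteq> P 2" "P 1 \<noteq> P 3" "P 2 \<noteq> P 3" "Q 1 \<noteq> Q 2" "Q 1 \<noteq> Q 3" "Q 2 \<noteq> Q 3"
  shows "\<exists>M. invertible2 M \<and> (\<forall>j\<in>{1,2,3}. mat_P1 M (P j) = (Q j :: ('a::field \<times> 'a) set))"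
proof -
  obtain FP where FP: "invertible2 FP" "mat_P1 FP (proj_pt (1,0)) = P 1"
     "mat_P1 FP (proj_pt (0,1)) = P 2" "mat_P1 FP (proj_pt (1,1)) = P 3"
    using frame_P1[of "P 1" "P 2" "P 3"] assms by auto
  obtain FQ where FQ: "invertible2 FQ" "mat_P1 FQ (proj_pt (1,0)) = Q 1"
     "mat_P1 FQ (proj_pt (0,1)) = Q 2" "mat_P1 FQ (proj_pt (1,1)) = Q 3"
    using frame_P1[of "Q 1" "Q 2" "Q 3"] assms by auto
  define M where "M = mmul FQ (minv FP)"
  have inv: "invertible2 M" unfolding M_def using FP FQ by (simp add: mmul_inv minv_inv)
  have key: "mat_P1 M (mat_P1 FP E) = mat_P1 FQ E" for E
    unfolding M_def using FP(1)
    by (simp add: mat_P1_mult[symmetric] mat_P1_mult[of "minv FP" FP] mmul_minv mat_P1_id)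
  show ?thesis using inv key[of "proj_pt (1,0)"] key[of "proj_pt (0,1)"] key[of "proj_pt (1,1)"] FP FQ
    by (intro exI[of _ M]) auto
qed


lemma fix3_alg:
  fixes a0 a1 b0 b1 c0 c1 k1 k2 k3 k4 s1 s2 s3 :: "'a::field"
  assumes dab: "a0*b1 - a1*b0 \<noteq> 0" and dac: "a0*c1 - a1*c0 \<noteq> 0" and dbc: "b0*c1 - b1*c0 \<noteq> 0"
    and ea: "k1*a0 + k2*a1 = s1*a0" "k3*a0 + k4*a1 = s1*a1"
    and eb: "k1*b0 + k2*b1 = s2*b0" "k3*b0 + k4*b1 = s2*b1"
    and ec: "k1*c0 + k2*c1 = s3*c0" "k3*c0 + k4*c1 = s3*c1"
  shows "k1 = s1 \<and> k2 = 0 \<and> k3 = 0 \<and> k4 = s1"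
proof -
  define \<alpha> where "\<alpha> = c0*b1 - c1*b0"
  define \<beta> where "\<beta> = a0*c1 - a1*c0"
  define D where "D = a0*b1 - a1*b0"
  have al: "\<alpha> \<noteq> 0" unfolding \<alpha>_def using dbc by (auto simp: algebra_simps)
  have be: "\<beta> \<noteq> 0" unfolding \<beta>_def using dac by auto
  have hc0: "D*c0 = \<alpha>*a0 + \<beta>*b0" unfolding \<alpha>_def \<beta>_def D_def by (simp add: algebra_simps)
  have hc1: "D*c1 = \<alpha>*a1 + \<beta>*b1" unfolding \<alpha>_def \<beta>_def D_def by (simp add: algebra_simps)
  have r1: "D*(k1*c0 + k2*c1) = \<alpha>*(k1*a0 + k2*a1) + \<beta>*(k1*b0 + k2*b1)"
  proof -
    have "D*(k1*c0 + k2*c1) = k1*(D*c0) + k2*(D*c1)" by (simp add: algebra_simps)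
    also have "\<dots> = \<alpha>*(k1*a0 + k2*a1) + \<beta>*(k1*b0 + k2*b1)" unfolding hc0 hc1 by (simp add: algebra_simps)
    finally show ?thesis .
  qed
  have r2: "D*(k3*c0 + k4*c1) = \<alpha>*(k3*a0 + k4*a1) + \<beta>*(k3*b0 + k4*b1)"
  proof -
    have "D*(k3*c0 + k4*c1) = k3*(D*c0) + k4*(D*c1)" by (simp add: algebra_simps)
    also have "\<dots> = \<alpha>*(k3*a0 + k4*a1) + \<beta>*(k3*b0 + k4*b1)" unfolding hc0 hc1 by (simp add: algebra_simps)
    finally show ?thesis .
  qed
  have q1: "(\<alpha>*(s1 - s3))*a0 + (\<beta>*(s2 - s3))*b0 = 0"
  proof -
    have "\<alpha>*(s1*a0) + \<beta>*(s2*b0) = s3*(D*c0)" using r1 unfolding ea(1) eb(1) ec(1) by (simp add: algebra_simps)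
    then have "\<alpha>*(s1*a0) + \<beta>*(s2*b0) = s3*(\<alpha>*a0 + \<beta>*b0)" by (simp add: hc0)
    then show ?thesis by (simp add: algebra_simps)
  qed
  have q2: "(\<alpha>*(s1 - s3))*a1 + (\<beta>*(s2 - s3))*b1 = 0"
  proof -
    have "\<alpha>*(s1*a1) + \<beta>*(s2*b1) = s3*(D*c1)" using r2 unfolding ea(2) eb(2) ec(2) by (simp add: algebra_simps)
    then have "\<alpha>*(s1*a1) + \<beta>*(s2*b1) = s3*(\<alpha>*a1 + \<beta>*b1)" by (simp add: hc1)
    then show ?thesis by (simp add: algebra_simps)
  qed
  from indep[OF q1 q2 dab] al be have s: "s1 = s3" "s2 = s3" by auto
  have "(k1 - s1)*a0 + k2*a1 = 0" "(k1 - s1)*b0 + k2*b1 = 0" using ea eb s by (simp_all add: algebra_simps)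
  from indep[OF this] dab have 1: "k1 = s1" "k2 = 0" by (auto simp: algebra_simps)
  have "k3*a0 + (k4 - s1)*a1 = 0" "k3*b0 + (k4 - s1)*b1 = 0" using ea eb s by (simp_all add: algebra_simps)
  from indep[OF this] dab have 2: "k3 = 0" "k4 = s1" by (auto simp: algebra_simps)
  show ?thesis using 1 2 by simp
qed

lemma eigen:
  assumes "mat_P1 (k1,k2,k3,k4) (proj_pt (a0,a1)) = proj_pt (a0,a1)"
  shows "\<exists>s. s \<noteq> 0 \<and> k1*a0 + k2*a1 = s*a0 \<and> k3*a0 + k4*a1 = s*(a1::'a::field)"
proof -
  have "proj_pt (a0,a1) = proj_pt (k1*a0 + k2*a1, k3*a0 + k4*a1)" using assms by (simp add: mat_P1_proj)
  from proj_pt_eqD[OF this] show ?thesis by blast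
qed

lemma fix3:
  assumes "X1 \<in> P1" "X2 \<in> P1" "X3 \<in> P1" "X1 \<noteq> X2" "X1 \<noteq> X3" "X2 \<noteq> X3"
    and "mat_P1 K X1 = X1" "mat_P1 K X2 = X2" "mat_P1 K X3 = (X3::('a::field \<times> 'a) set)"
    and "Y \<in> P1"
  shows "mat_P1 K Y = Y"
proof -
  obtain k1 k2 k3 k4 where K: "K = (k1,k2,k3,k4)" by (cases K) auto
  obtain a0 a1 where a: "X1 = proj_pt (a0,a1)" "(a0,a1) \<noteq> (0,0)" using assms(1) by (rule P1_E)
  obtain b0 b1 where b: "X2 = proj_pt (b0,b1)" "(b0,b1) \<noteq> (0,0)" using assms(2) by (rule P1_E)
  obtain c0 c1 where c: "X3 = proj_pt (c0,c1)" "(c0,c1) \<noteq> (0,0)" using assms(3) by (rule P1_E)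
  obtain y0 y1 where y: "Y = proj_pt (y0,y1)" using assms(10) by (rule P1_E)
  have d1: "a0*b1 - a1*b0 \<noteq> 0" using proj_pt_det[of a0 a1 b0 b1] a b assms by simp
  have d2: "a0*c1 - a1*c0 \<noteq> 0" using proj_pt_det[of a0 a1 c0 c1] a c assms by simp
  have d3: "b0*c1 - b1*c0 \<noteq> 0" using proj_pt_det[of b0 b1 c0 c1] b c assms by simp
  obtain s1 where s1: "s1 \<noteq> 0" "k1*a0 + k2*a1 = s1*a0" "k3*a0 + k4*a1 = s1*a1"
    using eigen[of k1 k2 k3 k4 a0 a1] assms(7) a K by auto
  obtain s2 where s2: "k1*b0 + k2*b1 = s2*b0" "k3*b0 + k4*b1 = s2*b1"
    using eigen[of k1 k2 k3 k4 b0 b1] assms(8) b K by auto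
  obtain s3 where s3: "k1*c0 + k2*c1 = s3*c0" "k3*c0 + k4*c1 = s3*c1"
    using eigen[of k1 k2 k3 k4 c0 c1] assms(9) c K by auto
  have k: "k1 = s1 \<and> k2 = 0 \<and> k3 = 0 \<and> k4 = s1"
    using fix3_alg[OF d1 d2 d3 s1(2,3) s2 s3] .
  have "mat_P1 K Y = proj_pt (s1*y0, s1*y1)" using k K y by (simp add: mat_P1_proj)
  also have "\<dots> = Y" using y s1(1) proj_pt_scale by metis
  finally show ?thesis .
qed

lemma uniq:
  assumes "invertible2 M" "invertible2 N"
    and "X1 \<in> P1" "X2 \<in> P1" "X3 \<in> P1" "X1 \<noteq> X2" "X1 \<noteq> X3" "X2 \<noteq> X3"
    and "mat_P1 M X1 = mat_P1 N X1" "mat_P1 M X2 = mat_P1 N X2" "mat_P1 M X3 = mat_P1 N X3"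
    and "Y \<in> P1"
  shows "mat_P1 M Y = mat_P1 N (Y::('a::field \<times> 'a) set)"
proof -
  define K where "K = mmul (minv N) M"
  have bk: "mat_P1 (minv N) (mat_P1 N Z) = Z" for Z
    using assms(2) by (simp add: mat_P1_mult mmul_minv mat_P1_id)
  have fwd: "mat_P1 N (mat_P1 (minv N) Z) = Z" for Z
    using assms(2) by (simp add: mat_P1_mult mmul_minv2 mat_P1_id)
  have KX: "mat_P1 K Z = mat_P1 (minv N) (mat_P1 M Z)" for Z
    unfolding K_def by (simp add: mat_P1_mult)
  have "mat_P1 K Y = Y"
    using fix3[of X1 X2 X3 K Y] assms KX bk by simp
  then have "mat_P1 N (mat_P1 K Y) = mat_P1 N Y" by simp
  then show ?thesis using KX fwd by simp
qed

lemma Gal_D: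
  assumes "h \<in> Gal k"
  shows "bij h" "h 0 = 0" "h 1 = 1" "h (x + y) = h x + h y" "h (x * y) = h x * h y"
  using assms by (auto simp: Gal_def)

lemma gal_sub: "h \<in> Gal k \<Longrightarrow> h (x - y) = h x - h (y::'a::field)"
proof -
  assume h: "h \<in> Gal k"
  have "h (x - y) + h y = h x" using Gal_D(4)[OF h, of "x - y" y] by simp
  then show ?thesis by (simp add: algebra_simps)
qed

lemma gal_nz: "h \<in> Gal k \<Longrightarrow> x \<noteq> 0 \<Longrightarrow> h x \<noteq> (0::'a::field)"
  using Gal_D(1,2) by (metis bij_pointE)

lemma conj_proj:
  assumes h: "h \<in> Gal k"
  shows "conj_P1 h (proj_pt (x,y)) = proj_pt (h x, h (y::'a::field))"
proof (rule set_eqI)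
  fix z
  show "z \<in> conj_P1 h (proj_pt (x,y)) \<longleftrightarrow> z \<in> proj_pt (h x, h y)"
  proof
    assume "z \<in> conj_P1 h (proj_pt (x,y))"
    then obtain c where c: "c \<noteq> 0" "z = (h (c*x), h (c*y))" by (auto simp: conj_P1_def proj_pt_def)
    then have "z = (h c * h x, h c * h y)" "h c \<noteq> 0" using Gal_D(5)[OF h] gal_nz[OF h] by auto
    then show "z \<in> proj_pt (h x, h y)" unfolding proj_pt_def by auto
  next
    assume "z \<in> proj_pt (h x, h y)"
    then obtain c where c: "c \<noteq> 0" "z = (c * h x, c * h y)" by (auto simp: proj_pt_def)
    obtain c' where c': "c = h c'" using Gal_D(1)[OF h] by (metis bij_pointE)
    have "c' \<noteq> 0" using c c' Gal_D(2)[OF h] by auto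
    moreover have "z = (h (c'*x), h (c'*y))" using c c' Gal_D(5)[OF h] by simp
    ultimately show "z \<in> conj_P1 h (proj_pt (x,y))" unfolding conj_P1_def proj_pt_def by force
  qed
qed

lemma conj_P1_in: "h \<in> Gal k \<Longrightarrow> X \<in> P1 \<Longrightarrow> conj_P1 h X \<in> (P1::('a::field \<times> 'a) set set)"
proof -
  assume h: "h \<in> Gal k" and X: "X \<in> P1"
  obtain x y where xy: "X = proj_pt (x,y)" "(x,y) \<noteq> (0,0)" using X by (rule P1_E)
  have "(h x, h y) \<noteq> (0,0)" using xy gal_nz[OF h] by auto
  then show ?thesis using xy conj_proj[OF h] by (auto simp: P1_def)
qed

lemma conj_mat:
  assumes h: "h \<in> Gal k"
  shows "conj_P1 h (mat_P1 M X) = mat_P1 (conjM h M) (conj_P1 h (X::('a::field \<times> 'a) set))"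
proof (cases M)
  case (fields a b c d)
  show ?thesis unfolding fields conj_P1_def mat_P1_def conjM_def
    by (simp add: image_image case_prod_beta Gal_D(4,5)[OF h])
qed

lemma inv_conj:
  assumes h: "h \<in> Gal k" and "invertible2 M"
  shows "invertible2 (conjM h (M::'a::field \<times> 'a \<times> 'a \<times> 'a))"
proof (cases M)
  case (fields a b c d)
  have "h (a*d - b*c) \<noteq> 0" using assms fields gal_nz[OF h] by (simp add: invertible2_def)
  then show ?thesis using fields by (simp add: conjM_def invertible2_def gal_sub[OF h] Gal_D(5)[OF h])
qed


lemma gal_transfer:
  assumes h: "h \<in> Gal k" and M: "invertible2 M" and N: "invertible2 N"
    and P: "\<forall>j\<in>{1,2,3::nat}. P j \<in> P1" "P 1 \<noteq> P 2" "P 1 \<noteq> P 3" "P 2 \<noteq> P 3"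
    and MQ: "\<forall>j\<in>{1,2,3}. mat_P1 M (P j) = Q j"
    and NQ: "\<forall>j\<in>{1,2,3}. mat_P1 N (P' j) = Q' j"
    and \<sigma>: "bij_betw \<sigma> {1,2,3} {1,2,3}"
    and c: "\<forall>i\<in>{1,2,3}. conj_P1 h (P' i) = P (\<sigma> i) \<and> conj_P1 h (Q' i) = Q (\<sigma> i)"
    and X: "X \<in> P1"
  shows "mat_P1 M (conj_P1 h X) = conj_P1 h (mat_P1 N (X::('a::field \<times> 'a) set))"
proof -
  have agree: "mat_P1 M (P j) = mat_P1 (conjM h N) (P j)" if j: "j \<in> {1,2,3}" for j
  proof -
    obtain i where i: "i \<in> {1,2,3}" "\<sigma> i = j"
      using \<sigma> j unfolding bij_betw_def by (metis imageE)
    have "mat_P1 (conjM h N) (P j) = mat_P1 (conjM h N) (conj_P1 h (P' i))" using c i by auto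
    also have "\<dots> = conj_P1 h (mat_P1 N (P' i))" using conj_mat[OF h] by simp
    also have "\<dots> = Q j" using NQ c i by auto
    also have "\<dots> = mat_P1 M (P j)" using MQ j by auto
    finally show ?thesis by simp
  qed
  have "mat_P1 M (conj_P1 h X) = mat_P1 (conjM h N) (conj_P1 h X)"
    using uniq[OF M inv_conj[OF h N], of "P 1" "P 2" "P 3" "conj_P1 h X"] P agree
      conj_P1_in[OF h X] by auto
  also have "\<dots> = conj_P1 h (mat_P1 N X)" using conj_mat[OF h] by simp
  finally show ?thesis .
qed


lemma dr: "distinct_rulings p \<Longrightarrow> i \<in> {1,2,3} \<Longrightarrow> j \<in> {1,2,3} \<Longrightarrow> i \<noteq> j \<Longrightarrow>
   fst (p i) \<noteq> fst (p j) \<and> snd (p i) \<noteq> snd (p j)"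
  unfolding distinct_rulings_def by blast

theorem lemma3p7:
  fixes k L :: "'a::field set" and p q :: "nat \<Rightarrow> 'a qpt"
  assumes "alg_closed_type TYPE('a)"
    and "perfect_subfield k"
    and "\<forall>x. algebraic_over k x"
    and "quadratic_ext k L"
    and "deg3_point k L p" and "deg3_point k L q"
    and "\<forall>h\<in>Gal k. \<exists>\<sigma>. bij_betw \<sigma> {1,2,3} {1,2,3} \<and>
           (\<forall>i\<in>{1,2,3}. gal_act L h (p i) = p (\<sigma> i) \<and> gal_act L h (q i) = q (\<sigma> i))"
    and "distinct_rulings p" and "distinct_rulings q"
  shows "\<exists>\<alpha>\<in>Aut_QL k L. \<forall>i\<in>{1,2,3::nat}. \<alpha> (p i) = q i"
proof -
  have pin: "\<forall>j\<in>{1,2,3::nat}. fst (p j) \<in> P1 \<and> snd (p j) \<in> P1"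
    using assms(5) by (auto simp: deg3_point_def QL_points_def)
  have qin: "\<forall>j\<in>{1,2,3::nat}. fst (q j) \<in> P1 \<and> snd (q j) \<in> P1"
    using assms(6) by (auto simp: deg3_point_def QL_points_def)
  have dp: "fst (p 1) \<noteq> fst (p 2)" "fst (p 1) \<noteq> fst (p 3)" "fst (p 2) \<noteq> fst (p 3)"
     "snd (p 1) \<noteq> snd (p 2)" "snd (p 1) \<noteq> snd (p 3)" "snd (p 2) \<noteq> snd (p 3)"
    using dr[OF assms(8), of 1 2] dr[OF assms(8), of 1 3] dr[OF assms(8), of 2 3] by simp_all
  have dq: "fst (q 1) \<noteq> fst (q 2)" "fst (q 1) \<noteq> fst (q 3)" "fst (q 2) \<noteq> fst (q 3)"
     "snd (q 1) \<noteq> snd (q 2)" "snd (q 1) \<noteq> snd (q 3)" "snd (q 2) \<noteq> snd (q 3)"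
    using dr[OF assms(9), of 1 2] dr[OF assms(9), of 1 3] dr[OF assms(9), of 2 3] by simp_all
  have pq1: "\<forall>j\<in>{1,2,3::nat}. fst (p j) \<in> P1 \<and> fst (q j) \<in> P1"
    and pq2: "\<forall>j\<in>{1,2,3::nat}. snd (p j) \<in> P1 \<and> snd (q j) \<in> P1" using pin qin by blast+
  obtain A where A: "invertible2 A" "\<forall>j\<in>{1,2,3}. mat_P1 A (fst (p j)) = fst (q j)"
    using exists_mat[where P="\<lambda>j. fst (p j)" and Q="\<lambda>j. fst (q j)", OF pq1 dp(1,2,3) dq(1,2,3)] by blast
  obtain B where B: "invertible2 B" "\<forall>j\<in>{1,2,3}. mat_P1 B (snd (p j)) = snd (q j)"
    using exists_mat[where P="\<lambda>j. snd (p j)" and Q="\<lambda>j. snd (q j)", OF pq2 dp(4,5,6) dq(4,5,6)] by blast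
  define \<alpha> where "\<alpha> = (\<lambda>pt::'a qpt. (mat_P1 A (fst pt), mat_P1 B (snd pt)))"
  have aut: "\<alpha> \<in> Aut_kbar" unfolding Aut_kbar_def \<alpha>_def
    using A(1) B(1) by (intro CollectI exI[of _ A] exI[of _ B] exI[of _ False]) simp
  have comm: "\<alpha> (gal_act L h pt) = gal_act L h (\<alpha> pt)" if h: "h \<in> Gal k" and pt: "pt \<in> QL_points" for h pt
  proof -
    obtain \<sigma> where \<sigma>: "bij_betw \<sigma> {1,2,3} {1,2,3}"
      "\<forall>i\<in>{1,2,3}. gal_act L h (p i) = p (\<sigma> i) \<and> gal_act L h (q i) = q (\<sigma> i)"
      using assms(7) h by blast
    have ptin: "fst pt \<in> P1" "snd pt \<in> P1" using pt by (auto simp: QL_points_def)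
    show ?thesis
    proof (cases "\<forall>x\<in>L. h x = x")
      case True
      have g: "gal_act L h z = (conj_P1 h (fst z), conj_P1 h (snd z))" for z
        using True by (simp add: gal_act_def)
      have c1: "\<forall>i\<in>{1,2,3}. conj_P1 h (fst (p i)) = fst (p (\<sigma> i)) \<and> conj_P1 h (fst (q i)) = fst (q (\<sigma> i))"
        and c2: "\<forall>i\<in>{1,2,3}. conj_P1 h (snd (p i)) = snd (p (\<sigma> i)) \<and> conj_P1 h (snd (q i)) = snd (q (\<sigma> i))"
        using \<sigma>(2) unfolding g prod_eq_iff fst_conv snd_conv by blast+
      have e1: "mat_P1 A (conj_P1 h (fst pt)) = conj_P1 h (mat_P1 A (fst pt))"
        by (rule gal_transfer[OF h A(1) A(1), where P="\<lambda>j. fst (p j)" and Q="\<lambda>j. fst (q j)" and P'="\<lambda>j. fst (p j)" and Q'="\<lambda>j. fst (q j)" and \<sigma>=\<sigma> and X="fst pt"], (fact dp \<sigma>(1) ptin | simp add: pin A(2) c1)+)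
      have e2: "mat_P1 B (conj_P1 h (snd pt)) = conj_P1 h (mat_P1 B (snd pt))"
        by (rule gal_transfer[OF h B(1) B(1), where P="\<lambda>j. snd (p j)" and Q="\<lambda>j. snd (q j)" and P'="\<lambda>j. snd (p j)" and Q'="\<lambda>j. snd (q j)" and \<sigma>=\<sigma> and X="snd pt"], (fact dp \<sigma>(1) ptin | simp add: pin B(2) c2)+)
      show ?thesis unfolding g \<alpha>_def using e1 e2 by simp
    next
      case False
      have g: "gal_act L h z = (conj_P1 h (snd z), conj_P1 h (fst z))" for z
        by (simp only: gal_act_def if_not_P[OF False])
      have c1: "\<forall>i\<in>{1,2,3}. conj_P1 h (snd (p i)) = fst (p (\<sigma> i)) \<and> conj_P1 h (snd (q i)) = fst (q (\<sigma> i))"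
        and c2: "\<forall>i\<in>{1,2,3}. conj_P1 h (fst (p i)) = snd (p (\<sigma> i)) \<and> conj_P1 h (fst (q i)) = snd (q (\<sigma> i))"
        using \<sigma>(2) unfolding g prod_eq_iff fst_conv snd_conv by blast+
      have e1: "mat_P1 A (conj_P1 h (snd pt)) = conj_P1 h (mat_P1 B (snd pt))"
        by (rule gal_transfer[OF h A(1) B(1), where P="\<lambda>j. fst (p j)" and Q="\<lambda>j. fst (q j)" and P'="\<lambda>j. snd (p j)" and Q'="\<lambda>j. snd (q j)" and \<sigma>=\<sigma> and X="snd pt"], (fact dp \<sigma>(1) ptin | simp add: pin A(2) B(2) c1)+)
      have e2: "mat_P1 B (conj_P1 h (fst pt)) = conj_P1 h (mat_P1 A (fst pt))"
        by (rule gal_transfer[OF h B(1) A(1), where P="\<lambda>j. snd (p j)" and Q="\<lambda>j. snd (q j)" and P'="\<lambda>j. fst (p j)" and Q'="\<lambda>j. fst (q j)" and \<sigma>=\<sigma> and X="fst pt"], (fact dp \<sigma>(1) ptin | simp add: pin A(2) B(2) c2)+)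
      show ?thesis unfolding g \<alpha>_def using e1 e2 by simp
    qed
  qed
  have "\<alpha> \<in> Aut_QL k L" unfolding Aut_QL_def using aut comm by blast
  moreover have "\<forall>i\<in>{1,2,3::nat}. \<alpha> (p i) = q i"
    using A(2) B(2) unfolding \<alpha>_def by (simp add: prod_eq_iff)
  ultimately show ?thesis by blast
qed

end
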